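(* Let $\mathbf L$ be an algebraic lattice with an equa-interior operator $\eta$ satisfying \[ (\dagger)\qquad \tau(x)\le\tau(c)\ \&\ \eta(z)\le c\ \implies\ \eta(\eta(z)\vee\tau(x\wedge z))\le c \quad\text{for all }x,z,c\in L. \] Then $(\mathbf L,\eta)$ satisfies the four-coatom condition: whenever $a,b,c,d$ are coatoms of $\mathbf L$ such that $a\sim d$, $\eta(a)\not\le d$, $\eta(c)\le d$ and $\eta(c)=\eta(a\wedge b)$, then $\eta(c)=\eta(b\wedge d)$.
   Context: An equa-interior operator on an algebraic lattice $\mathbf L$ is a map $\eta:L\to L$ such that for all $x,y,z\in L$: (I1) $\eta(x)\le x$; (I2) $x\ge y$ implies $\eta(x)\ge\eta(y)$; (I3) $\eta^2(x)=\eta(x)$; (I4) $\eta(1)=1$; (I5) if $\eta(x)=u$ for all $x\in X\subseteq L$ then $\eta(\bigvee X)=u$; (I6) $\eta(x)\vee(y\wedge z)=(\eta(x)\vee y)\wedge(\eta(x)\vee z)$; (I7) the image $\eta(L)$ is the complete join subsemilattice of $L$ generated by the elements of $\eta(L)$ that are compact in $\mathbf L$; (I8) there is a compact element $w\in L$ with $\eta(w)=w$ such that the interval $[w,1]$ is isomorphic to the congruence lattice of a join semilattice with $0$. Define $\tau(x)=\bigvee\{z\in L:\eta(z)=\eta(x)\}$. For coatoms $a,d$, $a\sim d$ means the principal filter ${\uparrow}(a\wedge d)$ has exactly four elements, namely $\{1,a,d,a\wedge d\}$. *)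

theory Defs
  imports Main
begin

definition compact_el :: "'a::complete_lattice \<Rightarrow> bool" where
  "compact_el c \<longleftrightarrow> (\<forall>X. c \<le> Sup X \<longrightarrow> (\<exists>F. finite F \<and> F \<subseteq> X \<and> c \<le> Sup F))"

definition algebraic_lattice :: "'a::complete_lattice itself \<Rightarrow> bool" where
  "algebraic_lattice _ \<longleftrightarrow> (\<forall>x::'a. x = Sup {c. compact_el c \<and> c \<le> x})"

definition join_semilattice0 :: "'b set \<Rightarrow> ('b \<Rightarrow> 'b \<Rightarrow> 'b) \<Rightarrow> 'b \<Rightarrow> bool" where
  "join_semilattice0 S j z \<longleftrightarrow>
     z \<in> S \<and> (\<forall>x\<in>S. \<forall>y\<in>S. j x y \<in> S)
     \<and> (\<forall>x\<in>S. \<forall>y\<in>S. \<forall>u\<in>S. j (j x y) u = j x (j y u))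
     \<and> (\<forall>x\<in>S. \<forall>y\<in>S. j x y = j y x)
     \<and> (\<forall>x\<in>S. j x x = x)
     \<and> (\<forall>x\<in>S. j z x = x)"

definition semilattice_congruences :: "'b set \<Rightarrow> ('b \<Rightarrow> 'b \<Rightarrow> 'b) \<Rightarrow> ('b \<times> 'b) set set" where
  "semilattice_congruences S j =
     {\<theta>. equiv S \<theta> \<and>
          (\<forall>x y u v. (x, y) \<in> \<theta> \<longrightarrow> (u, v) \<in> \<theta> \<longrightarrow> (j x u, j y v) \<in> \<theta>)}"

text \<open>The interval [w,1] of L is order-isomorphic (hence lattice-isomorphic) to
  the congruence lattice (ordered by inclusion) of the join semilattice (S,j,z).\<close>
definition interval_iso_Con :: "'a::complete_lattice \<Rightarrow> 'b set \<Rightarrow> ('b \<Rightarrow> 'b \<Rightarrow> 'b) \<Rightarrow> bool" where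
  "interval_iso_Con w S j \<longleftrightarrow>
     (\<exists>f. bij_betw f {x. w \<le> x} (semilattice_congruences S j) \<and>
          (\<forall>x\<in>{x. w \<le> x}. \<forall>y\<in>{x. w \<le> x}. x \<le> y \<longleftrightarrow> f x \<subseteq> f y))"

definition equa_interior :: "('a::complete_lattice \<Rightarrow> 'a) \<Rightarrow> 'b itself \<Rightarrow> bool" where
  "equa_interior \<eta> _ \<longleftrightarrow>
     (\<forall>x. \<eta> x \<le> x) \<and>
     (\<forall>x y. y \<le> x \<longrightarrow> \<eta> y \<le> \<eta> x) \<and>
     (\<forall>x. \<eta> (\<eta> x) = \<eta> x) \<and>
     \<eta> top = top \<and>
     (\<forall>X u. X \<noteq> {} \<longrightarrow> (\<forall>x\<in>X. \<eta> x = u) \<longrightarrow> \<eta> (Sup X) = u) \<and>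
     (\<forall>x y z. sup (\<eta> x) (inf y z) = inf (sup (\<eta> x) y) (sup (\<eta> x) z)) \<and>
     range \<eta> = {Sup Y | Y. Y \<subseteq> {c \<in> range \<eta>. compact_el c}} \<and>
     (\<exists>w. compact_el w \<and> \<eta> w = w \<and>
        (\<exists>(S::'b set) j z. join_semilattice0 S j z \<and> interval_iso_Con w S j))"

definition tau :: "('a::complete_lattice \<Rightarrow> 'a) \<Rightarrow> 'a \<Rightarrow> 'a" where
  "tau \<eta> x = Sup {z. \<eta> z = \<eta> x}"

definition coatom :: "'a::complete_lattice \<Rightarrow> bool" where
  "coatom a \<longleftrightarrow> a < top \<and> (\<forall>x. a \<le> x \<longrightarrow> x = a \<or> x = top)"

definition coatom_sim :: "'a::complete_lattice \<Rightarrow> 'a \<Rightarrow> bool" where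
  "coatom_sim a d \<longleftrightarrow> {x. inf a d \<le> x} = {top, a, d, inf a d} \<and> card {top, a, d, inf a d} = 4"

end

theory Submission
  imports Defs
begin

theorem theorem6p3:
  fixes \<eta> :: "'a::complete_lattice \<Rightarrow> 'a"
  assumes alg: "algebraic_lattice TYPE('a)"
    and eq: "equa_interior \<eta> TYPE('b)"
    and dagger: "\<And>x z c. tau \<eta> x \<le> tau \<eta> c \<Longrightarrow> \<eta> z \<le> c \<Longrightarrow>
                   \<eta> (sup (\<eta> z) (tau \<eta> (inf x z))) \<le> c"
  shows "\<forall>a b c d. coatom a \<and> coatom b \<and> coatom c \<and> coatom d \<and> coatom_sim a d \<and>
           \<not> (\<eta> a \<le> d) \<and> \<eta> c \<le> d \<and> \<eta> c = \<eta> (inf a b)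
           \<longrightarrow> \<eta> c = \<eta> (inf b d)"
proof (intro allI impI)
  fix a b c d
  assume H: "coatom a \<and> coatom b \<and> coatom c \<and> coatom d \<and> coatom_sim a d \<and>
           \<not> (\<eta> a \<le> d) \<and> \<eta> c \<le> d \<and> \<eta> c = \<eta> (inf a b)"
  note E = eq[unfolded equa_interior_def]
  have I1: "\<And>x. \<eta> x \<le> x" using E[THEN conjunct1] by blast
  have I2: "\<And>x y. y \<le> x \<Longrightarrow> \<eta> y \<le> \<eta> x" using E[THEN conjunct2, THEN conjunct1] by blast
  have I3: "\<And>x. \<eta> (\<eta> x) = \<eta> x" using E[THEN conjunct2, THEN conjunct2, THEN conjunct1] by blast
  have I4: "\<eta> top = top" using E[THEN conjunct2, THEN conjunct2, THEN conjunct2, THEN conjunct1] by blast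
  have I5: "\<And>X u. X \<noteq> {} \<Longrightarrow> (\<forall>x\<in>X. \<eta> x = u) \<Longrightarrow> \<eta> (Sup X) = u"
    using E[THEN conjunct2, THEN conjunct2, THEN conjunct2, THEN conjunct2, THEN conjunct1] by blast
  have tau_up: "\<And>x y. \<eta> y = \<eta> x \<Longrightarrow> y \<le> tau \<eta> x"
    unfolding tau_def by (rule Sup_upper) simp
  have tau_ge: "\<And>x. x \<le> tau \<eta> x" using tau_up by blast
  have eta_tau: "\<And>x. \<eta> (tau \<eta> x) = \<eta> x"
    unfolding tau_def by (rule I5) auto
  have ca: "coatom a" and cc: "coatom c" and cd: "coatom d" and sim: "coatom_sim a d"
    and na: "\<not> (\<eta> a \<le> d)" and cle: "\<eta> c \<le> d" and ceq: "\<eta> c = \<eta> (inf a b)"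
    using H by auto
  have dtop: "d < top" using cd unfolding coatom_def by blast
  have u_bd: "\<eta> c \<le> inf b d"
    using ceq I1[of "inf a b"] cle by (metis inf.bounded_iff le_inf_iff)
  have "\<eta> c \<le> \<eta> (inf b d)" using I2[OF u_bd] I3[of c] by simp
  moreover have "\<eta> (inf b d) \<le> c"
  proof (rule ccontr)
    assume nv: "\<not> \<eta> (inf b d) \<le> c"
    have vtop: "sup (\<eta> (inf b d)) c = top"
    proof -
      have "c \<le> sup (\<eta> (inf b d)) c" by simp
      then have "sup (\<eta> (inf b d)) c = c \<or> sup (\<eta> (inf b d)) c = top"
        using cc unfolding coatom_def by blast
      moreover have "sup (\<eta> (inf b d)) c \<noteq> c" using nv by (metis sup.cobounded1)
      ultimately show ?thesis by blast
    qed
    have filt: "tau \<eta> (inf a d) \<in> {top, a, d, inf a d}"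
    proof -
      have S: "{x. inf a d \<le> x} = {top, a, d, inf a d}" using sim unfolding coatom_sim_def by (rule conjunct1)
      have "tau \<eta> (inf a d) \<in> {x. inf a d \<le> x}" using tau_ge[of "inf a d"] by simp
      then show ?thesis unfolding S .
    qed
    have tad: "tau \<eta> (inf a d) \<le> tau \<eta> d"
    proof -
      have "tau \<eta> (inf a d) \<noteq> top"
      proof
        assume "tau \<eta> (inf a d) = top"
        then have "\<eta> (inf a d) = top" using eta_tau[of "inf a d"] I4 by simp
        then have "top \<le> d" using I1[of "inf a d"] by (metis inf.boundedE)
        then show False using dtop by simp
      qed
      moreover have "tau \<eta> (inf a d) \<noteq> a"
        using eta_tau[of "inf a d"] I1[of "inf a d"] na by (metis inf.bounded_iff)
      ultimately have "tau \<eta> (inf a d) \<le> d" using filt by auto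
      then show ?thesis using tau_ge[of d] by (rule order_trans)
    qed
    have etv: "\<eta> (inf b d) \<le> d" using I1[of "inf b d"] by (meson inf.boundedE)
    have D: "\<eta> (sup (\<eta> (inf b d)) (tau \<eta> (inf (inf a d) (inf b d)))) \<le> d"
      by (rule dagger[OF tad etv])
    have yeq: "\<eta> (inf (inf a d) (inf b d)) = \<eta> c"
    proof (rule antisym)
      show "\<eta> (inf (inf a d) (inf b d)) \<le> \<eta> c"
        using ceq I2[of "inf (inf a d) (inf b d)" "inf a b"] by (simp add: le_infI1 inf.coboundedI2 inf_assoc inf_left_commute)
      have "\<eta> c \<le> inf (inf a d) (inf b d)"
        using u_bd ceq I1[of "inf a b"] by (simp add: le_inf_iff)
      then have "\<eta> (\<eta> c) \<le> \<eta> (inf (inf a d) (inf b d))" by (rule I2)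
      then show "\<eta> c \<le> \<eta> (inf (inf a d) (inf b d))" using I3[of c] by simp
    qed
    have "c \<le> tau \<eta> (inf (inf a d) (inf b d))" using tau_up yeq by metis
    then have "sup (\<eta> (inf b d)) (tau \<eta> (inf (inf a d) (inf b d))) = top"
      using vtop by (metis sup_mono order_refl top_unique)
    then show False using D I4 dtop by simp
  qed
  then have "\<eta> (\<eta> (inf b d)) \<le> \<eta> c" by (rule I2)
  then have "\<eta> (inf b d) \<le> \<eta> c" using I3 by simp
  ultimately show "\<eta> c = \<eta> (inf b d)" by (rule antisym)
qed

end
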